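(* Let $f$ be a Moufang permutation on an abelian group $(X,+)$ with associated biadditive mapping $\beta$, and let $i\in\mathbb Z$. Define $\beta_i(x,y)=\sum_{k\in I(0,i)}f^{-3k}(\beta(x,y))$. Then $f^i$ is a Moufang permutation on $(X,+)$ with associated biadditive mapping $\beta_i$, and $$\mathrm{Img}(\beta_i)\subseteq\mathrm{Img}(\beta)\subseteq\mathrm{Rad}(\beta)\subseteq\mathrm{Rad}(\beta_i).$$
   Context: A permutation $f$ of an abelian group $(X,+)$ is a Moufang permutation if the map $\beta(x,y)=f^{-1}(f(x)+f(y))-x-y$ (P1) is symmetric, alternating ($\beta(x,x)=0$) and biadditive, and for all $x,y,z\in X$: (P2) $\beta(\beta(x,y),z)=0$ and (P3) $\beta(f(x),f(y))=f(\beta(f^3(x),y))$; $\beta$ is the associated biadditive mapping. $\mathrm{Img}$ denotes image; $\mathrm{Rad}(\beta)=\{x\in X:\beta(x,y)=0\ \forall y\in X\}$. $I(i,j)$ is $\emptyset$ if $i=j$, $\{i,\dots,j-1\}$ if $i<j$, $\{j,\dots,i-1\}$ if $j<i$. *)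

theory Defs
  imports Main
begin

text \<open>The abelian group (X,+) is the whole type 'a of class ab_group_add.\<close>

definition assoc_map :: "('a::ab_group_add \<Rightarrow> 'a) \<Rightarrow> 'a \<Rightarrow> 'a \<Rightarrow> 'a" where
  "assoc_map f x y = inv f (f x + f y) - x - y"

definition biadditive :: "('a::ab_group_add \<Rightarrow> 'a \<Rightarrow> 'a) \<Rightarrow> bool" where
  "biadditive b \<longleftrightarrow> (\<forall>x y z. b (x + y) z = b x z + b y z) \<and> (\<forall>x y z. b x (y + z) = b x y + b x z)"

definition moufang_perm :: "('a::ab_group_add \<Rightarrow> 'a) \<Rightarrow> bool" where
  "moufang_perm f \<longleftrightarrow> bij f \<and>
     (let \<beta> = assoc_map f in
        (\<forall>x y. \<beta> x y = \<beta> y x) \<and> (\<forall>x. \<beta> x x = 0) \<and> biadditive \<beta> \<and>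
        (\<forall>x y z. \<beta> (\<beta> x y) z = 0) \<and>
        (\<forall>x y. \<beta> (f x) (f y) = f (\<beta> ((f ^^ 3) x) y)))"

definition fpow :: "('a \<Rightarrow> 'a) \<Rightarrow> int \<Rightarrow> 'a \<Rightarrow> 'a" where
  "fpow f i = (if 0 \<le> i then f ^^ nat i else inv f ^^ nat (- i))"

definition Iset :: "int \<Rightarrow> int \<Rightarrow> int set" where
  "Iset i j = (if i = j then {} else if i < j then {i..j-1} else {j..i-1})"

definition Img :: "('a \<Rightarrow> 'a \<Rightarrow> 'b) \<Rightarrow> 'b set" where
  "Img b = {b x y | x y. True}"

definition Rad :: "('a \<Rightarrow> 'a \<Rightarrow> 'b::zero) \<Rightarrow> 'a set" where
  "Rad b = {x. \<forall>y. b x y = 0}"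

end

theory Submission
  imports Defs
begin

lemma sum_hom_R:
  assumes "\<And>a n. P n \<Longrightarrow> h (a + n) = h a + h n" "h 0 = 0"
    "finite A" "\<And>k. k \<in> A \<Longrightarrow> P (t k)"
  shows "h (sum t A) = (\<Sum>k\<in>A. h (t k))"
  using assms(3,4)
proof (induction A rule: finite_induct)
  case empty then show ?case using assms(2) by simp
next
  case (insert x F)
  have "h (sum t (insert x F)) = h (sum t F + t x)" using insert by (simp add: add.commute)
  also have "\<dots> = h (sum t F) + h (t x)" using assms(1) insert by simp
  finally show ?case using insert by (simp add: add.commute)
qed

context
  fixes f :: "'a::ab_group_add \<Rightarrow> 'a"
  assumes M: "moufang_perm f"
begin

lemma bijf: "bij f" using M unfolding moufang_perm_def by simp
lemma symb: "assoc_map f x y = assoc_map f y x" using M unfolding moufang_perm_def Let_def by blast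
lemma altb: "assoc_map f x x = 0" using M unfolding moufang_perm_def Let_def by blast
lemma biadd: "biadditive (assoc_map f)" using M unfolding moufang_perm_def Let_def by blast
lemma badd1: "assoc_map f (x + y) z = assoc_map f x z + assoc_map f y z"
  using biadd unfolding biadditive_def by blast
lemma badd2: "assoc_map f x (y + z) = assoc_map f x y + assoc_map f x z"
  using biadd unfolding biadditive_def by blast
lemma P2: "assoc_map f (assoc_map f x y) z = 0" using M unfolding moufang_perm_def Let_def by blast
lemma P3: "assoc_map f (f x) (f y) = f (assoc_map f (f (f (f x))) y)"
  using M unfolding moufang_perm_def Let_def by (simp add: numeral_3_eq_3)

lemma fg: "f (inv f z) = z" using bijf by (simp add: bij_is_surj surj_f_inv_f)
lemma gf: "inv f (f z) = z" using bijf by (simp add: bij_is_inj)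

lemma F1: "f (x + y + assoc_map f x y) = f x + f y"
  unfolding assoc_map_def using fg by simp

lemma b0: "assoc_map f 0 y = 0"
  using badd1[of 0 0 y] by simp

lemma bsum: "finite A \<Longrightarrow> assoc_map f (sum t A) y = (\<Sum>k\<in>A. assoc_map f (t k) y)"
  by (induction A rule: finite_induct) (simp_all add: b0 badd1)

lemma P2': "assoc_map f z (assoc_map f x y) = 0" using P2 symb by metis

lemma f0: "f 0 = 0" using F1[of 0 0] altb[of 0] by simp
lemma g0: "inv f 0 = 0" using gf[of 0] f0 by simp

lemma fadd: "(\<forall>z. assoc_map f n z = 0) \<Longrightarrow> f (a + n) = f a + f n"
  using F1[of a n] symb[of a n] by simp

lemma key1: "assoc_map f a b = f (assoc_map f (f (f a)) (inv f b))"
proof -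
  have "assoc_map f (f (inv f a)) (f (inv f b)) = f (assoc_map f (f (f (f (inv f a)))) (inv f b))"
    by (rule P3)
  then show ?thesis by (simp only: fg)
qed

lemma key2: "assoc_map f (f a) (f b) = inv f (inv f (assoc_map f a b))"
proof -
  have "assoc_map f (f (f a)) (inv f b) = assoc_map f (inv f b) (f (f a))" by (rule symb)
  also have "\<dots> = f (assoc_map f (f (f (inv f b))) (inv f (f (f a))))" by (rule key1)
  also have "\<dots> = f (assoc_map f (f b) (f a))" by (simp only: fg gf)
  also have "\<dots> = f (assoc_map f (f a) (f b))" by (simp only: symb[of "f b"])
  finally have "assoc_map f a b = f (f (assoc_map f (f a) (f b)))" using key1[of a b] by simp
  then show ?thesis by (simp only: gf)
qed

lemma key2': "assoc_map f (inv f a) (inv f b) = f (f (assoc_map f a b))"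
  using key2[of "inv f a" "inv f b"] by (simp only: fg)

lemma key3: "assoc_map f (f (f (f x))) y = inv f (inv f (inv f (assoc_map f x y)))"
proof -
  have "f (assoc_map f (f (f (f x))) y) = inv f (inv f (assoc_map f x y))"
    using P3[of x y] key2[of x y] by simp
  then have "inv f (f (assoc_map f (f (f (f x))) y)) = inv f (inv f (inv f (assoc_map f x y)))" by simp
  then show ?thesis by (simp only: gf)
qed

lemma key3': "assoc_map f (inv f (inv f (inv f x))) y = f (f (f (assoc_map f x y)))"
proof -
  have "assoc_map f x y = inv f (inv f (inv f (assoc_map f (inv f (inv f (inv f x))) y)))"
    using key3[of "inv f (inv f (inv f x))" y] by (simp only: fg)
  then have "f (f (f (assoc_map f x y))) = f (f (f (inv f (inv f (inv f (assoc_map f (inv f (inv f (inv f x))) y))))))" by simp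
  then show ?thesis by (simp only: fg)
qed

lemma radI: "assoc_map f x y \<in> Rad (assoc_map f)"
  unfolding Rad_def using P2 by simp

lemma rad_f: "n \<in> Rad (assoc_map f) \<Longrightarrow> f n \<in> Rad (assoc_map f)"
  unfolding Rad_def using key2[of n "inv f z" for z] by (simp add: fg g0)

lemma rad_g: "n \<in> Rad (assoc_map f) \<Longrightarrow> inv f n \<in> Rad (assoc_map f)"
  unfolding Rad_def using key2'[of n "f z" for z] by (simp add: gf f0)

lemma fadd': "n \<in> Rad (assoc_map f) \<Longrightarrow> f (a + n) = f a + f n"
  using fadd unfolding Rad_def by simp

lemma gadd: "n \<in> Rad (assoc_map f) \<Longrightarrow> inv f (a + n) = inv f a + inv f n"
proof -
  assume n: "n \<in> Rad (assoc_map f)"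
  have "f (inv f a + inv f n) = a + n" using fadd'[OF rad_g[OF n]] by (simp add: fg)
  then have "inv f (f (inv f a + inv f n)) = inv f (a + n)" by simp
  then show ?thesis by (simp add: gf)
qed

lemma iter_rad:
  assumes "\<And>n. n \<in> Rad (assoc_map f) \<Longrightarrow> h n \<in> Rad (assoc_map f)"
  shows "n \<in> Rad (assoc_map f) \<Longrightarrow> (h ^^ m) n \<in> Rad (assoc_map f)"
  by (induction m) (simp_all add: assms)

lemma iter_add:
  assumes "\<And>n. n \<in> Rad (assoc_map f) \<Longrightarrow> h n \<in> Rad (assoc_map f)"
    "\<And>a n. n \<in> Rad (assoc_map f) \<Longrightarrow> h (a + n) = h a + h n"
  shows "n \<in> Rad (assoc_map f) \<Longrightarrow> (h ^^ m) (a + n) = (h ^^ m) a + (h ^^ m) n"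
proof (induction m)
  case 0 then show ?case by simp
next
  case (Suc m)
  then show ?case using assms iter_rad[of h, OF assms(1)] by simp
qed

lemma fit_rad: "n \<in> Rad (assoc_map f) \<Longrightarrow> (f ^^ m) n \<in> Rad (assoc_map f)"
  using iter_rad rad_f by blast
lemma git_rad: "n \<in> Rad (assoc_map f) \<Longrightarrow> (inv f ^^ m) n \<in> Rad (assoc_map f)"
  using iter_rad rad_g by blast
lemma fit_add: "n \<in> Rad (assoc_map f) \<Longrightarrow> (f ^^ m) (a + n) = (f ^^ m) a + (f ^^ m) n"
  using iter_add[of f] rad_f fadd' by blast
lemma git_add: "n \<in> Rad (assoc_map f) \<Longrightarrow> (inv f ^^ m) (a + n) = (inv f ^^ m) a + (inv f ^^ m) n"
  using iter_add[of "inv f"] rad_g gadd by blast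
lemma fit0: "(f ^^ m) 0 = 0" by (induction m) (simp_all add: f0)
lemma git0: "(inv f ^^ m) 0 = 0" by (induction m) (simp_all add: g0)

lemma fgit: "(f ^^ m) ((inv f ^^ m) z) = z"
proof (induction m arbitrary: z)
  case 0 then show ?case by simp
next
  case (Suc m)
  have "(f ^^ Suc m) ((inv f ^^ Suc m) z) = f ((f ^^ m) ((inv f ^^ m) (inv f z)))"
    by (simp add: funpow_swap1)
  then show ?case using Suc by (simp add: fg)
qed

lemma gfit: "(inv f ^^ m) ((f ^^ m) z) = z"
proof (induction m arbitrary: z)
  case 0 then show ?case by simp
next
  case (Suc m)
  have "(inv f ^^ Suc m) ((f ^^ Suc m) z) = inv f ((inv f ^^ m) ((f ^^ m) (f z)))"
    by (simp add: funpow_swap1)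
  then show ?case using Suc by (simp add: gf)
qed

lemma L1: "assoc_map f ((f ^^ m) x) ((f ^^ m) y) = (inv f ^^ (2 * m)) (assoc_map f x y)"
proof (induction m)
  case 0 then show ?case by simp
next
  case (Suc m)
  have "assoc_map f ((f ^^ Suc m) x) ((f ^^ Suc m) y) = inv f (inv f (assoc_map f ((f ^^ m) x) ((f ^^ m) y)))"
    using key2 by simp
  also have "\<dots> = (inv f ^^ (2 * Suc m)) (assoc_map f x y)" using Suc by simp
  finally show ?case .
qed

lemma L2: "assoc_map f ((f ^^ (3 * m)) x) y = (inv f ^^ (3 * m)) (assoc_map f x y)"
proof (induction m)
  case 0 then show ?case by simp
next
  case (Suc m)
  have e: "3 * Suc m = Suc (Suc (Suc (3 * m)))" by simp
  have "(f ^^ (3 * Suc m)) x = f (f (f ((f ^^ (3 * m)) x)))" by (simp only: e funpow.simps comp_apply)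
  then have "assoc_map f ((f ^^ (3 * Suc m)) x) y = inv f (inv f (inv f (assoc_map f ((f ^^ (3 * m)) x) y)))"
    using key3 by simp
  also have "\<dots> = (inv f ^^ (3 * Suc m)) (assoc_map f x y)" using Suc by (simp only: e funpow.simps comp_apply)
  finally show ?case .
qed

lemma L2': "assoc_map f ((inv f ^^ (3 * m)) x) y = (f ^^ (3 * m)) (assoc_map f x y)"
proof -
  have "assoc_map f x y = (inv f ^^ (3 * m)) (assoc_map f ((inv f ^^ (3 * m)) x) y)"
    using L2[of m "(inv f ^^ (3 * m)) x" y] by (simp add: fgit)
  then show ?thesis by (metis fgit)
qed

lemma fg_shift: "(f ^^ n) ((inv f ^^ (3 * n)) z) = (inv f ^^ (2 * n)) z"
proof -
  have "inv f ^^ (3 * n) = inv f ^^ n \<circ> inv f ^^ (2 * n)"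
    by (simp add: funpow_add[symmetric])
  then show ?thesis by (simp add: fgit)
qed

lemma step_nat: "(f ^^ n) (x + y + (\<Sum>k<n. (inv f ^^ (3 * k)) (assoc_map f x y))) = (f ^^ n) x + (f ^^ n) y"
proof (induction n)
  case 0 then show ?case by simp
next
  case (Suc n)
  define S where "S = (\<Sum>k<n. (inv f ^^ (3 * k)) (assoc_map f x y))"
  define m where "m = (inv f ^^ (3 * n)) (assoc_map f x y)"
  have mR: "m \<in> Rad (assoc_map f)" unfolding m_def by (rule git_rad[OF radI])
  have "(f ^^ Suc n) (x + y + (\<Sum>k<Suc n. (inv f ^^ (3 * k)) (assoc_map f x y)))
      = f ((f ^^ n) ((x + y + S) + m))" by (simp add: S_def m_def add.assoc)
  also have "\<dots> = f ((f ^^ n) (x + y + S) + (f ^^ n) m)" using fit_add[OF mR] by simp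
  also have "\<dots> = f ((f ^^ n) x + (f ^^ n) y + (inv f ^^ (2 * n)) (assoc_map f x y))"
    using Suc unfolding S_def m_def by (simp add: fg_shift)
  also have "\<dots> = f ((f ^^ n) x + (f ^^ n) y + assoc_map f ((f ^^ n) x) ((f ^^ n) y))"
    by (simp add: L1)
  also have "\<dots> = (f ^^ Suc n) x + (f ^^ Suc n) y" by (simp add: F1)
  finally show ?case .
qed

lemma assoc_nat: "assoc_map (f ^^ n) x y = (\<Sum>k<n. (inv f ^^ (3 * k)) (assoc_map f x y))"
proof -
  have inj: "inj (f ^^ n)" using bijf by (simp add: bij_is_inj)
  show ?thesis unfolding assoc_map_def step_nat[symmetric] using inv_f_f[OF inj] by simp
qed

lemma git_sum: "finite A \<Longrightarrow> (\<And>k. k \<in> A \<Longrightarrow> t k \<in> Rad (assoc_map f)) \<Longrightarrow>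
   (inv f ^^ m) (sum t A) = (\<Sum>k\<in>A. (inv f ^^ m) (t k))"
  by (rule sum_hom_R[where P = "\<lambda>n. n \<in> Rad (assoc_map f)"]) (simp_all add: git_add git0)

lemma fit_sum: "finite A \<Longrightarrow> (\<And>k. k \<in> A \<Longrightarrow> t k \<in> Rad (assoc_map f)) \<Longrightarrow>
   (f ^^ m) (sum t A) = (\<Sum>k\<in>A. (f ^^ m) (t k))"
  by (rule sum_hom_R[where P = "\<lambda>n. n \<in> Rad (assoc_map f)"]) (simp_all add: fit_add fit0)

lemma gg: "(inv f ^^ a) ((inv f ^^ b) z) = (inv f ^^ (a + b)) z"
  by (simp add: funpow_add)

lemma gcomm: "(inv f ^^ a) ((inv f ^^ b) z) = (inv f ^^ b) ((inv f ^^ a) z)"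
  by (simp only: gg add.commute)

lemma moufang_nat: "moufang_perm (f ^^ n)"
proof -
  define S where "S = (\<lambda>x y. \<Sum>k<n. (inv f ^^ (3 * k)) (assoc_map f x y))"
  have A: "assoc_map (f ^^ n) = S" unfolding S_def by (intro ext) (rule assoc_nat)
  have sym: "\<forall>x y. S x y = S y x" unfolding S_def using symb by simp
  have alt: "\<forall>x. S x x = 0" unfolding S_def by (simp add: altb git0)
  have ba: "biadditive S" unfolding biadditive_def S_def
  proof (intro conjI allI)
    fix x y z
    show "(\<Sum>k<n. (inv f ^^ (3 * k)) (assoc_map f (x + y) z)) =
          (\<Sum>k<n. (inv f ^^ (3 * k)) (assoc_map f x z)) + (\<Sum>k<n. (inv f ^^ (3 * k)) (assoc_map f y z))"
      by (simp add: badd1 git_add radI sum.distrib)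
    show "(\<Sum>k<n. (inv f ^^ (3 * k)) (assoc_map f x (y + z))) =
          (\<Sum>k<n. (inv f ^^ (3 * k)) (assoc_map f x y)) + (\<Sum>k<n. (inv f ^^ (3 * k)) (assoc_map f x z))"
      by (simp add: badd2 git_add radI sum.distrib)
  qed
  have p2: "\<forall>x y z. S (S x y) z = 0"
  proof (intro allI)
    fix x y z
    have "assoc_map f (S x y) z = 0" unfolding S_def
      using git_rad[OF radI] by (simp add: bsum Rad_def)
    then show "S (S x y) z = 0" unfolding S_def by (simp add: git0)
  qed
  have p3: "\<forall>x y. S ((f ^^ n) x) ((f ^^ n) y) = (f ^^ n) (S (((f ^^ n) ^^ 3) x) y)"
  proof (intro allI)
    fix x y
    have "(f ^^ n) (S (((f ^^ n) ^^ 3) x) y) = (f ^^ n) (\<Sum>k<n. (inv f ^^ (3 * k)) ((inv f ^^ (3 * n)) (assoc_map f x y)))"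
      unfolding S_def funpow_mult by (simp add: L2[of n, simplified mult.commute] mult.commute)
    also have "\<dots> = (\<Sum>k<n. (f ^^ n) ((inv f ^^ (3 * k)) ((inv f ^^ (3 * n)) (assoc_map f x y))))"
      by (subst fit_sum) (simp_all add: git_rad radI)
    also have "\<dots> = (\<Sum>k<n. (inv f ^^ (3 * k)) ((inv f ^^ (2 * n)) (assoc_map f x y)))"
      by (rule sum.cong[OF refl]) (metis fg_shift gcomm)
    also have "\<dots> = S ((f ^^ n) x) ((f ^^ n) y)" unfolding S_def by (simp add: L1)
    finally show "S ((f ^^ n) x) ((f ^^ n) y) = (f ^^ n) (S (((f ^^ n) ^^ 3) x) y)" by simp
  qed
  show ?thesis unfolding moufang_perm_def Let_def A using sym alt ba p2 p3 bijf by simp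
qed

lemma two: "assoc_map f x y + assoc_map f x y = 0"
proof -
  have "0 = assoc_map f (x + y) (x + y)" by (simp add: altb)
  also have "\<dots> = assoc_map f x y + assoc_map f y x" unfolding badd1 badd2 by (simp add: altb)
  finally show ?thesis using symb[of y x] by simp
qed

lemma f3neg: "- f (f (f (assoc_map f x y))) = f (f (f (assoc_map f x y)))"
proof -
  have "f (f (f (assoc_map f x y))) = assoc_map f (inv f (inv f (inv f x))) y" by (simp add: key3')
  then show ?thesis using two[of "inv f (inv f (inv f x))" y] by (simp add: add_eq_0_iff)
qed

lemma invinv: "inv (inv f) = f" using bijf by (simp add: inv_inv_eq)

lemma assoc_g: "assoc_map (inv f) x y = f (f (f (assoc_map f x y)))"
proof -
  have "f (inv f x + inv f y + assoc_map f (inv f x) (inv f y)) = x + y" by (simp add: F1 fg)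
  moreover have "f (inv f x + inv f y + assoc_map f (inv f x) (inv f y)) =
      f (inv f x + inv f y) + f (assoc_map f (inv f x) (inv f y))" by (rule fadd'[OF radI])
  ultimately have "f (inv f x + inv f y) = x + y - f (f (f (assoc_map f x y)))"
    by (simp add: key2' eq_diff_eq)
  then have "assoc_map (inv f) x y = - f (f (f (assoc_map f x y)))"
    unfolding assoc_map_def invinv by simp
  then show ?thesis by (simp add: f3neg)
qed

lemma f3add: "n \<in> Rad (assoc_map f) \<Longrightarrow> f (f (f (a + n))) = f (f (f a)) + f (f (f n))"
  by (simp add: fadd' rad_f)

lemma f30: "f (f (f 0)) = 0" by (simp add: f0)

lemma moufang_g: "moufang_perm (inv f)"
proof -
  have A: "assoc_map (inv f) = (\<lambda>x y. f (f (f (assoc_map f x y))))" by (intro ext) (rule assoc_g)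
  have ba: "biadditive (\<lambda>x y. f (f (f (assoc_map f x y))))" unfolding biadditive_def
    by (simp add: badd1 badd2 f3add radI)
  have p2: "\<forall>x y z. f (f (f (assoc_map f (f (f (f (assoc_map f x y)))) z))) = 0"
    using rad_f[OF rad_f[OF rad_f[OF radI]]] by (simp add: Rad_def f30)
  have e3: "\<And>x. (inv f ^^ 3) x = inv f (inv f (inv f x))" by (simp add: numeral_3_eq_3)
  have p3: "\<forall>x y. f (f (f (assoc_map f (inv f x) (inv f y)))) =
       inv f (f (f (f (assoc_map f ((inv f ^^ 3) x) y))))"
    by (simp add: e3 key2' key3' gf)
  show ?thesis unfolding moufang_perm_def Let_def A
    using bijf ba p2 p3 symb altb f30 by (simp add: bij_imp_bij_inv)
qed

end

lemma fpow_nat: "fpow f (int m) = f ^^ m" unfolding fpow_def by simp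
lemma fpow_neg: "fpow f (- int m) = inv f ^^ m" unfolding fpow_def by (cases "m = 0") simp_all

lemma f3: "(f ^^ 3) z = f (f (f z))" by (simp add: numeral_3_eq_3)

lemma Iset_pos: "Iset 0 (int n) = int ` {..<n}"
  unfolding Iset_def lessThan_atLeast0 image_int_atLeastLessThan by auto

lemma Iset_neg: assumes "0 < n" shows "Iset 0 (- int n) = (\<lambda>j. - int j - 1) ` {..<n}"
proof -
  have "{- int n..- 1} = (\<lambda>j. - int j - 1) ` {..<n}"
  proof (rule set_eqI, rule iffI)
    fix x assume "x \<in> {- int n..- 1}"
    then show "x \<in> (\<lambda>j. - int j - 1) ` {..<n}"
      by (intro image_eqI[where x = "nat (- x - 1)"]) auto
  next
    fix x assume "x \<in> (\<lambda>j. - int j - 1) ` {..<n}"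
    then show "x \<in> {- int n..- 1}" by auto
  qed
  then show ?thesis using assms unfolding Iset_def by simp
qed

lemma inj_negm1: "inj_on (\<lambda>j::nat. - int j - 1) A" by (auto simp: inj_on_def)

lemma term_eq:
  assumes M: "moufang_perm f"
  shows "fpow f (-3 * k) (assoc_map f x y) = assoc_map f (fpow f (3 * k) x) y"
proof (cases "k \<ge> 0")
  case True
  then obtain m where k: "k = int m" by (metis nonneg_eq_int)
  have "fpow f (-3 * k) = inv f ^^ (3 * m)" using fpow_neg[of f "3 * m"] k by simp
  moreover have "fpow f (3 * k) = f ^^ (3 * m)" using fpow_nat[of f "3 * m"] k by simp
  ultimately show ?thesis using L2[OF M] by simp
next
  case False
  then obtain m where k: "k = - int m" by (metis neg_int_cases not_le)
  have "fpow f (-3 * k) = f ^^ (3 * m)" using fpow_nat[of f "3 * m"] k by simp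
  moreover have "fpow f (3 * k) = inv f ^^ (3 * m)" using fpow_neg[of f "3 * m"] k by simp
  ultimately show ?thesis using L2'[OF M] by simp
qed

lemma fpow0: "moufang_perm f \<Longrightarrow> fpow f m 0 = 0"
  unfolding fpow_def by (simp add: fit0 git0)

theorem mainTheorem13:
  fixes f :: "'a::ab_group_add \<Rightarrow> 'a" and i :: int
  assumes "moufang_perm f"
  defines "\<beta> \<equiv> assoc_map f"
  defines "\<beta>i \<equiv> (\<lambda>x y. \<Sum>k\<in>Iset 0 i. fpow f (-3 * k) (\<beta> x y))"
  shows "moufang_perm (fpow f i) \<and> assoc_map (fpow f i) = \<beta>i \<and>
         Img \<beta>i \<subseteq> Img \<beta> \<and> Img \<beta> \<subseteq> Rad \<beta> \<and> Rad \<beta> \<subseteq> Rad \<beta>i"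
proof -
  note M = assms(1)
  have finI: "finite (Iset 0 i)" unfolding Iset_def by simp
  have part1: "moufang_perm (fpow f i) \<and> assoc_map (fpow f i) = \<beta>i"
  proof (cases "i \<ge> 0")
    case True
    then obtain n where i: "i = int n" by (metis nonneg_eq_int)
    have "assoc_map (fpow f i) = \<beta>i"
    proof (intro ext)
      fix x y
      have "\<beta>i x y = (\<Sum>k<n. fpow f (-3 * int k) (\<beta> x y))"
        unfolding \<beta>i_def i Iset_pos by (simp add: sum.reindex)
      also have "\<dots> = (\<Sum>k<n. (inv f ^^ (3 * k)) (\<beta> x y))"
        using fpow_neg[of f "3 * k" for k] by simp
      finally show "assoc_map (fpow f i) x y = \<beta>i x y"
        unfolding i fpow_nat \<beta>_def using assoc_nat[OF M] by simp
    qed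
    then show ?thesis unfolding i fpow_nat using moufang_nat[OF M] by simp
  next
    case False
    then obtain n where i: "i = - int n" and n: "0 < n" by (metis neg_int_cases not_le of_nat_0_less_iff neg_0_less_iff_less)
    have "assoc_map (fpow f i) = \<beta>i"
    proof (intro ext)
      fix x y
      have "\<beta>i x y = (\<Sum>k<n. fpow f (-3 * (- int k - 1)) (\<beta> x y))"
        unfolding \<beta>i_def i Iset_neg[OF n] by (simp add: sum.reindex inj_negm1)
      also have "\<dots> = (\<Sum>k<n. (f ^^ (3 * k + 3)) (\<beta> x y))"
        using fpow_nat[of f "3 * k + 3" for k] by (simp add: algebra_simps)
      also have "\<dots> = (\<Sum>k<n. (f ^^ (3 * k)) (f (f (f (\<beta> x y)))))"
        by (simp only: funpow_add comp_apply f3)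
      finally show "assoc_map (fpow f i) x y = \<beta>i x y"
        unfolding i fpow_neg \<beta>_def using assoc_nat[OF moufang_g[OF M]]
        by (simp add: invinv[OF M] assoc_g[OF M])
    qed
    then show ?thesis unfolding i fpow_neg using moufang_nat[OF moufang_g[OF M]] by simp
  qed
  have img: "Img \<beta>i \<subseteq> Img \<beta>"
  proof
    fix v assume "v \<in> Img \<beta>i"
    then obtain x y where v: "v = \<beta>i x y" unfolding Img_def by blast
    have "v = (\<Sum>k\<in>Iset 0 i. \<beta> (fpow f (3 * k) x) y)"
      unfolding v \<beta>i_def \<beta>_def using term_eq[OF M] by simp
    also have "\<dots> = \<beta> (\<Sum>k\<in>Iset 0 i. fpow f (3 * k) x) y"
      unfolding \<beta>_def using bsum[OF M finI] by simp
    finally show "v \<in> Img \<beta>" unfolding Img_def by blast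
  qed
  have r1: "Img \<beta> \<subseteq> Rad \<beta>" unfolding \<beta>_def Img_def using radI[OF M] by blast
  have r2: "Rad \<beta> \<subseteq> Rad \<beta>i" unfolding Rad_def \<beta>i_def using fpow0[OF M] by auto
  show ?thesis using part1 img r1 r2 by blast
qed

end
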